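(* Let $(a_i)_{i\ge0}$ be a quasi-species, let $p_n(\mathbf y)$ be its associated linear sequence of symmetric functions of binomial type, and let $p_n(x)=\Pi\,p_n(\mathbf y)\in\mathbb C[x]$. Let $\mathrm{Gen}(t)=\sum_{i\ge0}a_it^i/i!$. Then, as formal power series in $t$ with coefficients in $\mathbb C[x]$, $$\sum_{n\ge0}p_n(x)\frac{t^n}{n!}=\mathrm{Gen}(t)^x=\exp\big(x\log\mathrm{Gen}(t)\big).$$
   Context: A quasi-species is a sequence $(a_i)_{i\ge0}$ of complex numbers with $a_0=1$ and $a_1\ne0$. The associated linear sequence of binomial type is $$p_n(\mathbf y)=\sum_{\lambda\vdash n}\frac{n!}{\prod_i\lambda_i!}\Big(\prod_i a_{\lambda_i}\Big)m_\lambda(\mathbf y),$$ where $m_\lambda$ is the monomial symmetric function. $\Pi$ is the algebra homomorphism from symmetric functions to $\mathbb C[x]$ given by $$\Pi\, m_\lambda(\mathbf y)=\frac{(x)_{\ell(\lambda)}}{\prod_{j\ge1}\mathrm{mult}_j(\lambda)!}.$$ Here $\ell(\lambda)$ is the number of nonzero parts, $\mathrm{mult}_j(\lambda)$ is the number of parts equal to $j$, and $(x)_k=x(x-1)\cdots(x-k+1)$. For a nonnegative integer $x$, $\Pi$ amounts to setting $y_1=\dots=y_x=1$ and all other variables equal to $0$. Since $a_0=1$, $\log\mathrm{Gen}(t)$ is a well-defined formal power series. *)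

theory Defs
  imports "HOL-Computational_Algebra.Computational_Algebra" "HOL-Library.Multiset"
begin

definition partitions :: "nat \<Rightarrow> nat multiset set" where
  "partitions n = {lam. (\<forall>i\<in>#lam. 0 < i) \<and> sum_mset lam = n}"

definition ffact_poly :: "nat \<Rightarrow> complex poly" where
  "ffact_poly k = (\<Prod>i<k. [:- of_nat i, 1:])"

text \<open>The homomorphism Pi on the monomial basis: Pi m_lambda = (x)_{l(lambda)} / prod_j mult_j(lambda)!.\<close>
definition Pi_m :: "nat multiset \<Rightarrow> complex poly" where
  "Pi_m lam = smult (1 / (\<Prod>j\<in>set_mset lam. fact (count lam j))) (ffact_poly (size lam))"

text \<open>p_n(x) = Pi p_n(y), obtained by applying the linear map Pi termwise to
  p_n(y) = sum_{lambda |- n} n!/prod lambda_i! * prod a_{lambda_i} * m_lambda(y).\<close>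
definition p_poly :: "(nat \<Rightarrow> complex) \<Rightarrow> nat \<Rightarrow> complex poly" where
  "p_poly a n = (\<Sum>lam\<in>partitions n.
      smult (fact n / (\<Prod>i\<in>#lam. fact i) * (\<Prod>i\<in>#lam. a i)) (Pi_m lam))"

definition quasi_species :: "(nat \<Rightarrow> complex) \<Rightarrow> bool" where
  "quasi_species a \<longleftrightarrow> a 0 = 1 \<and> a 1 \<noteq> 0"

definition Gen :: "(nat \<Rightarrow> complex) \<Rightarrow> complex fps" where
  "Gen a = Abs_fps (\<lambda>i. a i / fact i)"

definition fps_log :: "complex fps \<Rightarrow> complex fps" where
  "fps_log F = fps_ln 1 oo (F - 1)"

definition fps_exp_poly :: "complex poly fps \<Rightarrow> complex poly fps" where
  "fps_exp_poly G = Abs_fps (\<lambda>k. [:1 / fact k:]) oo G"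

definition fps_to_poly :: "complex fps \<Rightarrow> complex poly fps" where
  "fps_to_poly F = Abs_fps (\<lambda>n. [:F $ n:])"

end

theory Submission
  imports Defs
begin

definition bb :: "(nat \<Rightarrow> complex) \<Rightarrow> nat \<Rightarrow> complex" where
  "bb a i = a i / fact i"

definition HH :: "(nat \<Rightarrow> complex) \<Rightarrow> complex fps" where
  "HH a = Abs_fps (\<lambda>i. if i = 0 then 0 else bb a i)"

definition DD :: "nat multiset \<Rightarrow> complex" where
  "DD lam = (\<Prod>j\<in>set_mset lam. fact (count lam j))"

definition ww :: "(nat \<Rightarrow> complex) \<Rightarrow> nat multiset \<Rightarrow> complex" where
  "ww a lam = (\<Prod>i\<in>#lam. bb a i) / DD lam"

definition QQ :: "(nat \<Rightarrow> complex) \<Rightarrow> nat \<Rightarrow> nat \<Rightarrow> complex" where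
  "QQ a k n = (\<Sum>lam\<in>{lam\<in>partitions n. size lam = k}. ww a lam)"

lemma elem_le_sum_mset: "(i::nat) \<in># lam \<Longrightarrow> i \<le> sum_mset lam"
proof -
  assume i: "i \<in># lam"
  obtain M where M: "lam = add_mset i M" using multi_member_split[OF i] by blast
  show ?thesis unfolding M by simp
qed

lemma size_le_sum_mset: "(\<forall>i\<in>#lam. 0 < (i::nat)) \<Longrightarrow> size lam \<le> sum_mset lam"
  by (induction lam) auto

lemma partitions_finite: "finite (partitions n)"
proof -
  have "partitions n \<subseteq> mset ` {xs. set xs \<subseteq> {1..n} \<and> length xs \<le> n}"
  proof
    fix lam assume l: "lam \<in> partitions n"
    obtain xs where xs: "mset xs = lam" using ex_mset by blast
    have "set xs \<subseteq> {1..n}"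
      using l elem_le_sum_mset xs unfolding partitions_def
      by (auto simp: Suc_le_eq)
    moreover have "length xs \<le> n"
    proof -
      have "size lam \<le> sum_mset lam" using l size_le_sum_mset unfolding partitions_def by blast
      then show ?thesis using l xs unfolding partitions_def by auto
    qed
    ultimately show "lam \<in> mset ` {xs. set xs \<subseteq> {1..n} \<and> length xs \<le> n}"
      using xs by blast
  qed
  moreover have "finite {xs. set xs \<subseteq> {1..n} \<and> length xs \<le> (n::nat)}"
    by (rule finite_lists_length_le) simp
  ultimately show ?thesis by (meson finite_surj)
qed

lemma DD_superset:
  assumes "finite A" "set_mset lam \<subseteq> A"
  shows "DD lam = (\<Prod>j\<in>A. fact (count lam j))"
  unfolding DD_def
  by (rule prod.mono_neutral_left) (use assms in \<open>auto simp: not_in_iff\<close>)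

lemma DD_nonzero: "DD lam \<noteq> 0"
  unfolding DD_def by (simp add: prod_zero_iff)

lemma gen_cancel: assumes "(c::complex) \<noteq> 0" shows "c * (x / (c * y * z)) = x / (y * z)"
  by (simp only: times_divide_eq_right mult.assoc nonzero_mult_divide_mult_cancel_left[OF assms])

lemma gen2: assumes "(c::complex) \<noteq> 0" shows "b * (P / (f * R)) = c * (b * P / (c * f * R))"
  using assms by (simp add: field_simps)

lemma prodP: assumes i: "i \<in># lam" shows "(\<Prod>x\<in>#lam. bb a x) = bb a i * (\<Prod>x\<in>#lam - {#i#}. bb a x)"
proof -
  obtain M where M: "lam = add_mset i M" using multi_member_split[OF i] by blast
  show ?thesis unfolding M by simp
qed

lemma key_remove:
  assumes i: "i \<in># lam"
  shows "bb a i * ww a (lam - {#i#}) = of_nat (count lam i) * ww a lam"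
proof -
  let ?A = "set_mset lam"
  let ?c = "count lam i"
  have c1: "?c \<ge> 1" using i by (simp add: Suc_le_eq)
  have D1: "DD lam = fact ?c * (\<Prod>j\<in>?A - {i}. fact (count lam j))"
    unfolding DD_def using i by (subst prod.remove[of _ i]) auto
  have "DD (lam - {#i#}) = (\<Prod>j\<in>?A. fact (count (lam - {#i#}) j))"
    by (rule DD_superset) (auto dest: in_diffD)
  also have "\<dots> = fact (?c - 1) * (\<Prod>j\<in>?A - {i}. fact (count (lam - {#i#}) j))"
    using i by (subst prod.remove[of _ i]) auto
  also have "(\<Prod>j\<in>?A - {i}. fact (count (lam - {#i#}) j)) = (\<Prod>j\<in>?A - {i}. fact (count lam j) :: complex)"
    by (rule prod.cong) auto
  finally have D2: "DD (lam - {#i#}) = fact (?c - 1) * (\<Prod>j\<in>?A - {i}. fact (count lam j))" .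
  have fc: "(fact ?c :: complex) = of_nat ?c * fact (?c - 1)"
    using c1 by (simp add: fact_reduce)
  have P: "(\<Prod>x\<in>#lam. bb a x) = bb a i * (\<Prod>x\<in>#lam - {#i#}. bb a x)"
    by (rule prodP[OF i])
  have R: "(\<Prod>j\<in>?A - {i}. fact (count lam j) :: complex) \<noteq> 0"
    by (simp add: prod_zero_iff)
  have F: "(fact (?c - 1) :: complex) \<noteq> 0" by simp
  have cn: "(of_nat ?c :: complex) \<noteq> 0" using c1 by simp
  show ?thesis
    unfolding ww_def P D1 D2 fc
    by (rule gen2[OF cn])
qed

lemma sum_count_size: "sum (count lam) (set_mset lam) = size lam"
  by (simp add: size_multiset_overloaded_eq)

definition PT :: "nat \<Rightarrow> nat \<Rightarrow> nat multiset set" where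
  "PT k n = {lam\<in>partitions n. size lam = k}"

lemma PT_finite: "finite (PT k n)"
  unfolding PT_def using partitions_finite by simp

lemma QQ_PT: "QQ a k n = (\<Sum>lam\<in>PT k n. ww a lam)"
  unfolding QQ_def PT_def ..

lemma sum_remove:
  "of_nat (size lam) * ww a lam = (\<Sum>i\<in>set_mset lam. bb a i * ww a (lam - {#i#}))"
proof -
  have "(\<Sum>i\<in>set_mset lam. bb a i * ww a (lam - {#i#}))
      = (\<Sum>i\<in>set_mset lam. of_nat (count lam i) * ww a lam)"
    by (rule sum.cong) (auto simp: key_remove)
  also have "\<dots> = of_nat (sum (count lam) (set_mset lam)) * ww a lam"
    by (simp add: sum_distrib_right)
  finally show ?thesis by (simp add: sum_count_size)
qed

lemma QQ_step:
  "of_nat (Suc k) * QQ a (Suc k) n = (\<Sum>i\<in>{1..n}. bb a i * QQ a k (n - i))"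
proof -
  let ?S = "Sigma (PT (Suc k) n) set_mset"
  let ?T = "Sigma {1..n} (\<lambda>i. PT k (n - i))"
  have "of_nat (Suc k) * QQ a (Suc k) n = (\<Sum>lam\<in>PT (Suc k) n. of_nat (size lam) * ww a lam)"
    unfolding QQ_PT sum_distrib_left by (rule sum.cong) (auto simp: PT_def)
  also have "\<dots> = (\<Sum>lam\<in>PT (Suc k) n. \<Sum>i\<in>set_mset lam. bb a i * ww a (lam - {#i#}))"
    by (simp add: sum_remove)
  also have "\<dots> = (\<Sum>(lam, i)\<in>?S. bb a i * ww a (lam - {#i#}))"
    by (rule sum.Sigma) (auto simp: PT_finite)
  also have "\<dots> = (\<Sum>(i, mu)\<in>?T. bb a i * ww a mu)"
  proof (rule sum.reindex_bij_witness[where j = "\<lambda>(lam, i). (i, lam - {#i#})"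
        and i = "\<lambda>(i, mu). (add_mset i mu, i)"])
    fix p assume p: "p \<in> ?S"
    then obtain lam i where pe: "p = (lam, i)" and i: "i \<in># lam" and lam: "lam \<in> PT (Suc k) n"
      by auto
    show "(\<lambda>(i, mu). (add_mset i mu, i)) ((\<lambda>(lam, i). (i, lam - {#i#})) p) = p"
      using pe i by simp
    obtain M where M: "lam = add_mset i M" using multi_member_split[OF i] by blast
    have pos: "\<forall>x\<in>#lam. 0 < x" and sm: "sum_mset lam = n" and sz: "size lam = Suc k"
      using lam unfolding PT_def partitions_def by auto
    have "i \<in> {1..n}" using pos sm i elem_le_sum_mset[OF i] by (auto simp: Suc_le_eq)
    moreover have "M \<in> PT k (n - i)"
      using pos sm sz unfolding PT_def partitions_def M by auto
    ultimately show "(\<lambda>(lam, i). (i, lam - {#i#})) p \<in> ?T"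
      using pe M by simp
    show "(\<lambda>(i, mu). bb a i * ww a mu) ((\<lambda>(lam, i). (i, lam - {#i#})) p)
        = (\<lambda>(lam, i). bb a i * ww a (lam - {#i#})) p"
      using pe by simp
  next
    fix q assume q: "q \<in> ?T"
    then obtain i mu where qe: "q = (i, mu)" and i: "i \<in> {1..n}" and mu: "mu \<in> PT k (n - i)"
      by auto
    show "(\<lambda>(lam, i). (i, lam - {#i#})) ((\<lambda>(i, mu). (add_mset i mu, i)) q) = q"
      using qe by simp
    have "add_mset i mu \<in> PT (Suc k) n"
      using i mu unfolding PT_def partitions_def by auto
    then show "(\<lambda>(i, mu). (add_mset i mu, i)) q \<in> ?S"
      using qe by simp
  qed
  also have "\<dots> = (\<Sum>i\<in>{1..n}. \<Sum>mu\<in>PT k (n - i). bb a i * ww a mu)"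
    by (rule sum.Sigma[symmetric]) (auto simp: PT_finite)
  also have "\<dots> = (\<Sum>i\<in>{1..n}. bb a i * QQ a k (n - i))"
    by (simp add: QQ_PT sum_distrib_left)
  finally show ?thesis .
qed

lemma PT_0: "PT 0 n = (if n = 0 then {{#}} else {})"
  unfolding PT_def partitions_def by auto

lemma ww_empty: "ww a {#} = 1"
  unfolding ww_def DD_def by simp

lemma HH_pow: "(HH a ^ k) $ n = fact k * QQ a k n"
proof (induction k arbitrary: n)
  case 0
  then show ?case by (simp add: QQ_PT PT_0 ww_empty)
next
  case (Suc k)
  have "(HH a ^ Suc k) $ n = (\<Sum>i=0..n. HH a $ i * (HH a ^ k) $ (n - i))"
    by (simp add: fps_mult_nth)
  also have "\<dots> = (\<Sum>i=1..n. HH a $ i * (HH a ^ k) $ (n - i))"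
    by (simp add: sum.atLeast_Suc_atMost HH_def)
  also have "\<dots> = (\<Sum>i=1..n. fact k * (bb a i * QQ a k (n - i)))"
  proof (rule sum.cong[OF refl])
    fix i assume "i \<in> {1..n}"
    then have "HH a $ i = bb a i" by (simp add: HH_def)
    then show "HH a $ i * (HH a ^ k) $ (n - i) = fact k * (bb a i * QQ a k (n - i))"
      by (simp add: Suc.IH)
  qed
  also have "\<dots> = fact k * (of_nat (Suc k) * QQ a (Suc k) n)"
    by (simp only: QQ_step sum_distrib_left)
  also have "\<dots> = fact (Suc k) * QQ a (Suc k) n"
    by (simp add: algebra_simps)
  finally show ?case .
qed

lemma prod_mset_div: "(\<Prod>i\<in>#lam. bb a i) = (\<Prod>i\<in>#lam. a i) / (\<Prod>i\<in>#lam. fact i)"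
  by (induction lam) (auto simp: bb_def)

lemma smult_sum_right: "smult c (sum f A) = (\<Sum>i\<in>A. smult c (f i))"
  by (induction A rule: infinite_finite_induct) (auto simp: smult_add_right)

lemma lhs_coeff:
  "smult (1 / fact n) (p_poly a n) = (\<Sum>lam\<in>partitions n. smult (ww a lam) (ffact_poly (size lam)))"
  unfolding p_poly_def smult_sum_right
proof (rule sum.cong[OF refl])
  fix lam assume "lam \<in> partitions n"
  have "(fact n :: complex) \<noteq> 0" by simp
  moreover have "(\<Prod>i\<in>#lam. fact i :: complex) \<noteq> 0" by (auto simp: prod_mset_zero_iff)
  ultimately show "smult (1 / fact n) (smult (fact n / (\<Prod>i\<in>#lam. fact i) * (\<Prod>i\<in>#lam. a i)) (Pi_m lam))
      = smult (ww a lam) (ffact_poly (size lam))"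
    unfolding Pi_m_def ww_def prod_mset_div DD_def by (simp add: field_simps)
qed

lemma poly_ffact: "poly (ffact_poly k) (of_nat m) = of_nat (m choose k) * fact k"
proof -
  have "poly (ffact_poly k) (of_nat m) = (\<Prod>i = 0..<k. (of_nat m :: complex) - of_nat i)"
    unfolding ffact_poly_def poly_prod by (simp add: lessThan_atLeast0)
  also have "\<dots> = fact k * (of_nat m gchoose k)"
    by (rule gbinomial_mult_fact[symmetric])
  finally show ?thesis by (simp add: binomial_gbinomial)
qed

lemma size_le_partition: "lam \<in> partitions n \<Longrightarrow> size lam \<le> n"
  unfolding partitions_def using size_le_sum_mset by auto

lemma lhs_eval:
  assumes a0: "a 0 = 1"
  shows "poly (smult (1 / fact n) (p_poly a n)) (of_nat m) = ((Gen a) ^ m) $ n"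
proof -
  let ?C = "\<lambda>k. of_nat (m choose k) * fact k :: complex"
  have "poly (smult (1 / fact n) (p_poly a n)) (of_nat m)
      = (\<Sum>lam\<in>partitions n. ?C (size lam) * ww a lam)"
    unfolding lhs_coeff poly_sum by (simp add: poly_ffact mult.commute)
  also have "\<dots> = (\<Sum>k\<in>{..n+m}. \<Sum>lam\<in>{x. x \<in> partitions n \<and> size x = k}. ?C (size lam) * ww a lam)"
    by (rule sum.group[symmetric]) (auto simp: partitions_finite dest: size_le_partition)
  also have "\<dots> = (\<Sum>k\<in>{..n+m}. ?C k * QQ a k n)"
    unfolding QQ_def sum_distrib_left by (rule sum.cong[OF refl], rule sum.cong) auto
  also have "\<dots> = (\<Sum>k\<in>{..m}. ?C k * QQ a k n)"
    by (rule sum.mono_neutral_right) auto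
  also have "\<dots> = (\<Sum>k\<in>{..m}. of_nat (m choose k) * (HH a ^ k) $ n)"
    by (simp add: HH_pow mult.assoc)
  also have "\<dots> = ((HH a + 1) ^ m) $ n"
    unfolding binomial_ring fps_sum_nth by (simp flip: fps_of_nat)
  also have "HH a + 1 = Gen a"
    unfolding HH_def Gen_def bb_def by (rule fps_ext) (simp add: a0)
  finally show ?thesis .
qed

lemma const_poly_sum: "[:sum f A:] = (\<Sum>i\<in>A. [:f i:])"
proof (induction A rule: infinite_finite_induct)
  case (insert x F)
  have "[:sum f (insert x F):] = [:f x + sum f F:]" using insert by simp
  also have "\<dots> = [:f x:] + [:sum f F:]" by simp
  also have "\<dots> = [:f x:] + (\<Sum>i\<in>F. [:f i:])" by (simp only: insert.IH)
  also have "\<dots> = (\<Sum>i\<in>insert x F. [:f i:])" using insert by simp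
  finally show ?case .
qed auto

lemma fps_to_poly_mult: "fps_to_poly (A * B) = fps_to_poly A * fps_to_poly B"
  unfolding fps_to_poly_def
  by (rule fps_ext) (simp add: fps_mult_nth const_poly_sum mult.commute)

lemma fps_to_poly_power: "fps_to_poly (A ^ i) = fps_to_poly A ^ i"
  by (induction i) (simp_all add: fps_to_poly_mult, simp add: fps_to_poly_def fps_eq_iff)

lemma log_0: "fps_log G $ 0 = 0"
  unfolding fps_log_def by simp

lemma exp_log:
  assumes G0: "G $ 0 = 1"
  shows "fps_exp 1 oo fps_log G = G"
proof -
  have c0: "(G - 1) $ 0 = 0" using G0 by simp
  have b0: "fps_ln (1::complex) $ 0 = 0" by simp
  have e0: "(fps_exp (1::complex) - 1) $ 0 = 0" by simp
  have e1: "(fps_exp (1::complex) - 1) $ 1 \<noteq> 0" by simp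
  have "(fps_exp 1 - 1) oo fps_ln (1::complex) = fps_X"
    unfolding fps_ln_fps_exp_inv[of 1, simplified] by (rule fps_inv_right[OF e0 e1])
  then have "fps_exp 1 oo fps_ln (1::complex) = fps_X + 1"
    by (simp add: fps_compose_sub_distrib algebra_simps)
  then have "fps_exp 1 oo fps_log G = (fps_X + 1) oo (G - 1)"
    unfolding fps_log_def by (simp add: fps_compose_assoc[OF c0 b0])
  also have "\<dots> = G"
    using c0 by (simp add: fps_compose_add_distrib)
  finally show ?thesis .
qed

lemma rhs_eval:
  assumes G0: "G $ 0 = 1"
  shows "poly (fps_exp_poly (fps_const [:0, 1:] * fps_to_poly (fps_log G)) $ n) (of_nat m) = (G ^ m) $ n"
proof -
  let ?L = "fps_log G"
  have "poly (fps_exp_poly (fps_const [:0, 1:] * fps_to_poly ?L) $ n) x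
      = (\<Sum>i=0..n. 1 / fact i * (x ^ i * (?L ^ i) $ n))" for x :: complex
    unfolding fps_exp_poly_def fps_compose_nth power_mult_distrib fps_const_power
      fps_to_poly_power[symmetric]
    by (simp add: poly_sum fps_to_poly_def mult_ac)
  also have "(\<Sum>i=0..n. 1 / fact i * (x ^ i * (?L ^ i) $ n)) = (fps_exp x oo ?L) $ n" for x :: complex
    unfolding fps_compose_nth fps_exp_nth by (rule sum.cong) (simp_all add: field_simps)
  finally have "poly (fps_exp_poly (fps_const [:0, 1:] * fps_to_poly ?L) $ n) (of_nat m)
      = (fps_exp (of_nat m) oo ?L) $ n" .
  also have "fps_exp (of_nat m) = fps_exp (1::complex) ^ m"
    by (simp add: fps_exp_power_mult)
  also have "fps_exp 1 ^ m oo ?L = (fps_exp 1 oo ?L) ^ m"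
    by (rule fps_compose_power[OF log_0, symmetric])
  also have "fps_exp 1 oo ?L = G" by (rule exp_log[OF G0])
  finally show ?thesis .
qed

lemma poly_eq_nat:
  fixes p q :: "complex poly"
  assumes "\<And>m::nat. poly p (of_nat m) = poly q (of_nat m)"
  shows "p = q"
proof (rule ccontr)
  assume "p \<noteq> q"
  then have "p - q \<noteq> 0" by simp
  then have fin: "finite {x. poly (p - q) x = 0}" by (rule poly_roots_finite)
  have "range (of_nat :: nat \<Rightarrow> complex) \<subseteq> {x. poly (p - q) x = 0}"
    using assms by auto
  then have "finite (range (of_nat :: nat \<Rightarrow> complex))" using fin finite_subset by blast
  moreover have "inj (of_nat :: nat \<Rightarrow> complex)" by (simp add: inj_on_def)
  ultimately have "finite (UNIV :: nat set)" using finite_imageD by blast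
  then show False by simp
qed

theorem mainTheorem4:
  fixes a :: "nat \<Rightarrow> complex"
  assumes "quasi_species a"
  shows "Abs_fps (\<lambda>n. smult (1 / fact n) (p_poly a n))
       = fps_exp_poly (fps_const [:0, 1:] * fps_to_poly (fps_log (Gen a)))"
proof (rule fps_ext)
  fix n
  have a0: "a 0 = 1" using assms unfolding quasi_species_def by simp
  have G0: "Gen a $ 0 = 1" unfolding Gen_def using a0 by simp
  show "Abs_fps (\<lambda>n. smult (1 / fact n) (p_poly a n)) $ n
      = fps_exp_poly (fps_const [:0, 1:] * fps_to_poly (fps_log (Gen a))) $ n"
    unfolding fps_nth_Abs_fps
    by (rule poly_eq_nat) (simp only: lhs_eval[where a=a, OF a0] rhs_eval[OF G0])
qed

end
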